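(* Consider the system $$\dot v=(-\mu_1-p_{11}v^2+p_{12}A^2)v-M_2 s,\quad \dot A=(-\mu_2-p_{21}v^2+p_{22}A^2)A+M_3 s,\quad \dot s=2\alpha(v+M_1 s)s,$$ under the standing assumptions of the context, with $\mu_1<0$ and $\mu_2>p_{21}\mu_1/p_{11}$. If $\mu_2$ lies in the preservation regime (i.e. "the solution" converges to $\widetilde{\mathrm{EP}}_2^-$ as $t\to+\infty$), then $v(t)=O(|\boldsymbol\mu|^{1/2})$ and $s(t)=O(|\boldsymbol\mu|)$ for all $t>0$.
   Context: Standing assumptions: $\alpha>0$, $M_1\in\mathbb R$, $M_2>0$, $M_3>0$, $p_{11},p_{12},p_{21},p_{22}>0$, $p_{12}p_{21}<p_{11}p_{22}$, and $M_3/M_2>\max\{\sqrt{3p_{21}/p_{22}},\ 2p_{21}\sqrt{p_{11}p_{12}}/(p_{11}p_{22}-p_{12}p_{21})\}$. (The paper's further hypotheses on the underlying PDE impose no condition on this ODE.) Coordinates $(v,A,s)$; $v_{\rm ep2}=\sqrt{-\mu_1/p_{11}}$, $\widetilde{\mathrm{EP}}_2^\pm=(\pm v_{\rm ep2},0,0)$; $\widetilde{\mathrm{EP}}_2^+$ has positive eigenvalue $2\alpha v_{\rm ep2}$ and "the solution" is the trajectory emanating from $\widetilde{\mathrm{EP}}_2^+$ at $t=-\infty$ along this unstable direction into $s>0$. $\boldsymbol\mu=(\mu_1,\mu_2)$, $|\boldsymbol\mu|=\sqrt{\mu_1^2+\mu_2^2}$, and $O(|\boldsymbol\mu|^\beta)$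 means bounded by a constant times $|\boldsymbol\mu|^\beta$ as $\boldsymbol\mu\to0$. *)

theory Defs
  imports "HOL-Analysis.Analysis"
begin

definition standing_assms :: "real \<Rightarrow> real \<Rightarrow> real \<Rightarrow> real \<Rightarrow> real \<Rightarrow> real \<Rightarrow> real \<Rightarrow> bool" where
  "standing_assms \<alpha> M2 M3 p11 p12 p21 p22 \<longleftrightarrow>
     \<alpha> > 0 \<and> M2 > 0 \<and> M3 > 0 \<and> p11 > 0 \<and> p12 > 0 \<and> p21 > 0 \<and> p22 > 0 \<and>
     p12 * p21 < p11 * p22 \<and>
     M3 / M2 > max (sqrt (3 * p21 / p22)) (2 * p21 * sqrt (p11 * p12) / (p11 * p22 - p12 * p21))"

definition is_sol ::
  "real \<Rightarrow> real \<Rightarrow> real \<Rightarrow> real \<Rightarrow> real \<Rightarrow> real \<Rightarrow> real \<Rightarrow> real \<Rightarrow> real \<Rightarrow> real \<Rightarrow>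
   (real \<Rightarrow> real) \<Rightarrow> (real \<Rightarrow> real) \<Rightarrow> (real \<Rightarrow> real) \<Rightarrow> bool" where
  "is_sol \<alpha> M1 M2 M3 p11 p12 p21 p22 \<mu>1 \<mu>2 v A s \<longleftrightarrow>
     (\<forall>t. (v has_real_derivative
             ((- \<mu>1 - p11 * (v t)^2 + p12 * (A t)^2) * v t - M2 * s t)) (at t)
        \<and> (A has_real_derivative
             ((- \<mu>2 - p21 * (v t)^2 + p22 * (A t)^2) * A t + M3 * s t)) (at t)
        \<and> (s has_real_derivative (2 * \<alpha> * (v t + M1 * s t) * s t)) (at t))"

definition v_ep2 :: "real \<Rightarrow> real \<Rightarrow> real" where
  "v_ep2 p11 \<mu>1 = sqrt (- \<mu>1 / p11)"

text \<open>"The solution": the trajectory leaving EP2+ (as t \<rightarrow> -\<infinity>) along its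
  one-dimensional unstable direction into the half-space s > 0.\<close>
definition the_solution ::
  "real \<Rightarrow> real \<Rightarrow> real \<Rightarrow> real \<Rightarrow> real \<Rightarrow> real \<Rightarrow> real \<Rightarrow> real \<Rightarrow> real \<Rightarrow> real \<Rightarrow>
   (real \<Rightarrow> real) \<Rightarrow> (real \<Rightarrow> real) \<Rightarrow> (real \<Rightarrow> real) \<Rightarrow> bool" where
  "the_solution \<alpha> M1 M2 M3 p11 p12 p21 p22 \<mu>1 \<mu>2 v A s \<longleftrightarrow>
     is_sol \<alpha> M1 M2 M3 p11 p12 p21 p22 \<mu>1 \<mu>2 v A s
     \<and> ((\<lambda>t. (v t, A t, s t)) \<longlongrightarrow> (v_ep2 p11 \<mu>1, 0, 0)) at_bot
     \<and> (\<forall>\<^sub>F t in at_bot. s t > 0)"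

definition preservation ::
  "real \<Rightarrow> real \<Rightarrow> (real \<Rightarrow> real) \<Rightarrow> (real \<Rightarrow> real) \<Rightarrow> (real \<Rightarrow> real) \<Rightarrow> bool" where
  "preservation p11 \<mu>1 v A s \<longleftrightarrow>
     ((\<lambda>t. (v t, A t, s t)) \<longlongrightarrow> (- v_ep2 p11 \<mu>1, 0, 0)) at_top"

end

theory Submission
  imports Defs
begin


lemma first_hit:
  fixes f :: "real \<Rightarrow> real"
  assumes cont: "\<forall>t. isCont f t" and ab: "a \<le> b" and fa: "f a < L" and fb: "L \<le> f b"
  shows "\<exists>t0. a < t0 \<and> t0 \<le> b \<and> f t0 = L \<and> (\<forall>t. a \<le> t \<and> t < t0 \<longrightarrow> f t < L)"
proof -
  define S where "S = {t \<in> {a..b}. (\<lambda>_. L) t \<le> f t}"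
  have co: "continuous_on {a..b} f" using cont by (simp add: continuous_at_imp_continuous_on)
  have cS: "closed S" unfolding S_def
    by (rule continuous_on_closed_Collect_le[OF continuous_on_const co closed_atLeastAtMost])
  have bS: "b \<in> S" using ab fb by (simp add: S_def)
  have bdd: "bdd_below S" unfolding S_def by (rule bdd_belowI[of _ a]) auto
  define t0 where "t0 = Inf S"
  have t0S: "t0 \<in> S" unfolding t0_def using closed_contains_Inf[OF _ bdd cS] bS by blast
  have below: "f t < L" if "a \<le> t" "t < t0" for t
  proof (rule ccontr)
    assume "\<not> f t < L"
    then have "t \<in> S" using that t0S by (auto simp: S_def)
    then have "t0 \<le> t" unfolding t0_def by (rule cInf_lower[OF _ bdd])
    then show False using that by simp
  qed
  have at0: "a < t0" using t0S fa by (cases "t0 = a") (auto simp: S_def)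
  have "f t0 = L"
  proof (rule ccontr)
    assume "f t0 \<noteq> L"
    then have gt: "f t0 > L" using t0S by (auto simp: S_def)
    obtain d where d: "d > 0" "\<forall>x'. dist x' t0 < d \<longrightarrow> dist (f x') (f t0) < f t0 - L"
      using cont[rule_format, of t0] gt unfolding continuous_at_eps_delta by (meson diff_gt_0_iff_gt)
    define x' where "x' = max a (t0 - d/2)"
    have "dist x' t0 < d" using d at0 by (auto simp: x'_def dist_real_def)
    then have "dist (f x') (f t0) < f t0 - L" using d by blast
    moreover have "f x' < L" using below[of x'] at0 d by (auto simp: x'_def)
    ultimately show False by (auto simp: dist_real_def)
  qed
  then show ?thesis using at0 t0S below by (auto simp: S_def)
qed

lemma last_hit:
  fixes f :: "real \<Rightarrow> real"
  assumes cont: "\<forall>t. isCont f t" and ab: "a \<le> b" and fa: "L \<le> f a" and fb: "f b < L"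
  shows "\<exists>t0. a \<le> t0 \<and> t0 < b \<and> f t0 = L \<and> (\<forall>t. t0 < t \<and> t \<le> b \<longrightarrow> f t < L)"
proof -
  define S where "S = {t \<in> {a..b}. (\<lambda>_. L) t \<le> f t}"
  have co: "continuous_on {a..b} f" using cont by (simp add: continuous_at_imp_continuous_on)
  have cS: "closed S" unfolding S_def
    by (rule continuous_on_closed_Collect_le[OF continuous_on_const co closed_atLeastAtMost])
  have bS: "a \<in> S" using ab fa by (simp add: S_def)
  have bdd: "bdd_above S" unfolding S_def by (rule bdd_aboveI[of _ b]) auto
  define t0 where "t0 = Sup S"
  have t0S: "t0 \<in> S" unfolding t0_def using closed_contains_Sup[OF _ bdd cS] bS by blast
  have above: "f t < L" if "t \<le> b" "t0 < t" for t
  proof (rule ccontr)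
    assume "\<not> f t < L"
    then have "t \<in> S" using that t0S by (auto simp: S_def)
    then have "t \<le> t0" unfolding t0_def by (rule cSup_upper[OF _ bdd])
    then show False using that by simp
  qed
  have at0: "t0 < b" using t0S fb by (cases "t0 = b") (auto simp: S_def)
  have "f t0 = L"
  proof (rule ccontr)
    assume "f t0 \<noteq> L"
    then have gt: "f t0 > L" using t0S by (auto simp: S_def)
    obtain d where d: "d > 0" "\<forall>x'. dist x' t0 < d \<longrightarrow> dist (f x') (f t0) < f t0 - L"
      using cont[rule_format, of t0] gt unfolding continuous_at_eps_delta by (meson diff_gt_0_iff_gt)
    define x' where "x' = min b (t0 + d/2)"
    have "dist x' t0 < d" using d at0 by (auto simp: x'_def dist_real_def)
    then have "dist (f x') (f t0) < f t0 - L" using d by blast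
    moreover have "f x' < L" using above[of x'] at0 d by (auto simp: x'_def)
    ultimately show False by (auto simp: dist_real_def)
  qed
  then show ?thesis using at0 t0S above by (auto simp: S_def)
qed

lemma trap_backward:
  fixes f f' :: "real \<Rightarrow> real"
  assumes der: "\<forall>t. (f has_real_derivative f' t) (at t)"
    and face: "\<forall>t. f t = L \<longrightarrow> f' t < 0"
    and ev: "eventually (\<lambda>t. f t < L) at_bot"
  shows "f t1 < L"
proof (rule ccontr)
  assume "\<not> f t1 < L"
  then have f1: "L \<le> f t1" by simp
  have cont: "\<forall>t. isCont f t" using der DERIV_isCont by blast
  obtain N where N: "\<forall>t\<le>N. f t < L" using ev unfolding eventually_at_bot_linorder by blast
  define a where "a = min N (t1 - 1)"
  have fa: "f a < L" using N by (simp add: a_def)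
  have ab: "a \<le> t1" by (simp add: a_def)
  obtain t0 where t0: "a < t0" "t0 \<le> t1" "f t0 = L" "\<forall>t. a \<le> t \<and> t < t0 \<longrightarrow> f t < L"
    using first_hit[OF cont ab fa f1] by blast
  have "f' t0 < 0" using face t0 by blast
  then obtain d where d: "d > 0" "\<forall>h>0. h < d \<longrightarrow> f t0 < f (t0 - h)"
    using DERIV_neg_dec_left[OF der[rule_format, of t0]] by blast
  define h where "h = min d (t0 - a) / 2"
  have h: "h > 0" "h < d" "h < t0 - a" using d t0 by (auto simp: h_def)
  then have "f t0 < f (t0 - h)" using d by blast
  moreover have "f (t0 - h) < L" using t0(4) h by auto
  ultimately show False using t0 by simp
qed

lemma trap_forward:
  fixes f f' :: "real \<Rightarrow> real"
  assumes der: "\<forall>t. (f has_real_derivative f' t) (at t)"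
    and face: "\<forall>t. f t = L \<longrightarrow> f' t > 0"
    and ev: "eventually (\<lambda>t. f t < L) at_top"
  shows "f t1 < L"
proof (rule ccontr)
  assume "\<not> f t1 < L"
  then have f1: "L \<le> f t1" by simp
  have cont: "\<forall>t. isCont f t" using der DERIV_isCont by blast
  obtain N where N: "\<forall>t\<ge>N. f t < L" using ev unfolding eventually_at_top_linorder by blast
  define b where "b = max N (t1 + 1)"
  have fb: "f b < L" using N by (simp add: b_def)
  have ab: "t1 \<le> b" by (simp add: b_def)
  obtain t0 where t0: "t1 \<le> t0" "t0 < b" "f t0 = L" "\<forall>t. t0 < t \<and> t \<le> b \<longrightarrow> f t < L"
    using last_hit[OF cont ab f1 fb] by blast
  have "f' t0 > 0" using face t0 by blast
  then obtain d where d: "d > 0" "\<forall>h>0. h < d \<longrightarrow> f t0 < f (t0 + h)"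
    using DERIV_pos_inc_right[OF der[rule_format, of t0]] by blast
  define h where "h = min d (b - t0) / 2"
  have h: "h > 0" "h < d" "h < b - t0" using d t0 by (auto simp: h_def)
  then have "f t0 < f (t0 + h)" using d by blast
  moreover have "f (t0 + h) < L" using t0(4) h by auto
  ultimately show False using t0 by simp
qed



lemma s_pos:
  fixes s h :: "real \<Rightarrow> real"
  assumes der: "\<forall>t. (s has_real_derivative (h t * s t)) (at t)" and hc: "\<forall>t. isCont h t"
    and ev: "eventually (\<lambda>t. s t > 0) at_bot"
  shows "s t1 > 0"
proof (rule ccontr)
  assume "\<not> s t1 > 0"
  then have f1: "0 \<le> (\<lambda>t. - s t) t1" by simp
  have cont: "\<forall>t. isCont (\<lambda>t. - s t) t" using der DERIV_isCont by (blast intro: isCont_minus)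
  obtain N where N: "\<forall>t\<le>N. s t > 0" using ev unfolding eventually_at_bot_linorder by blast
  define a where "a = min N (t1 - 1)"
  have fa: "(\<lambda>t. - s t) a < 0" using N by (simp add: a_def)
  have ab: "a \<le> t1" by (simp add: a_def)
  obtain t0 where t0: "a < t0" "s t0 = 0" "\<forall>t. a \<le> t \<and> t < t0 \<longrightarrow> s t > 0"
    using first_hit[OF cont ab fa f1] by auto
  obtain d where d: "d > 0" "\<forall>x'. dist x' t0 < d \<longrightarrow> dist (h x') (h t0) < 1"
    using hc[rule_format, of t0] unfolding continuous_at_eps_delta by (meson zero_less_one)
  define K where "K = \<bar>h t0\<bar> + 1"
  define a' where "a' = max a (t0 - d/2)"
  have a': "a \<le> a'" "a' < t0" "t0 - a' < d" using t0 d by (auto simp: a'_def)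
  define u where "u t = s t * exp (K * t)" for t
  have uder: "(u has_real_derivative ((h t + K) * s t * exp (K * t))) (at t)" for t
    unfolding u_def
    by (auto intro!: derivative_eq_intros der[rule_format] simp: algebra_simps)
  obtain z where z: "a' < z" "z < t0" "u t0 - u a' = (t0 - a') * ((h z + K) * s z * exp (K * z))"
    using MVT2[OF a'(2), of u "\<lambda>t. (h t + K) * s t * exp (K * t)"] uder by blast
  have "dist z t0 < d" using z a' by (auto simp: dist_real_def)
  then have "\<bar>h z - h t0\<bar> < 1" using d by (auto simp: dist_real_def)
  then have hK: "h z + K \<ge> 0" unfolding K_def by linarith
  have sz: "s z > 0" using t0 z a' by auto
  have "(t0 - a') * ((h z + K) * s z * exp (K * z)) \<ge> 0"
    using hK sz a' by (intro mult_nonneg_nonneg) auto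
  moreover have "u a' > 0" using t0 a' by (auto simp: u_def)
  moreover have "u t0 = 0" using t0 by (simp add: u_def)
  ultimately show False using z by linarith
qed



lemma A_pos:
  fixes A g s :: "real \<Rightarrow> real"
  assumes der: "\<forall>t. (A has_real_derivative (g t * A t + M3 * s t)) (at t)"
    and M3: "M3 > 0" and sp: "\<forall>t. s t > 0"
    and evG: "eventually (\<lambda>t. g t < 0) at_bot" and lim: "(A \<longlongrightarrow> 0) at_bot"
  shows "A t1 > 0"
proof (rule ccontr)
  assume "\<not> A t1 > 0"
  then have A1: "A t1 \<le> 0" by simp
  have cont: "\<forall>t. isCont A t" using der DERIV_isCont by blast
  obtain t2 where t2: "A t2 < 0"
  proof (cases "A t1 < 0")
    case True then show ?thesis using that by blast
  next
    case False
    then have "A t1 = 0" using A1 by simp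
    moreover have "g t1 * A t1 + M3 * s t1 > 0" using calculation M3 sp by simp
    then obtain d where "d > 0" "\<forall>h>0. h < d \<longrightarrow> A (t1 - h) < A t1"
      using DERIV_pos_inc_left[OF der[rule_format, of t1]] by blast
    ultimately show ?thesis using that[of "t1 - d/2"] by auto
  qed
  have neg: "A t < 0" if tt2: "t \<le> t2" for t
  proof (rule ccontr)
    assume "\<not> A t < 0"
    then have "0 \<le> A t" by simp
    then obtain \<tau> where tau: "t \<le> \<tau>" "\<tau> < t2" "A \<tau> = 0" "\<forall>x. \<tau> < x \<and> x \<le> t2 \<longrightarrow> A x < 0"
      using last_hit[OF cont tt2 _ t2] by blast
    have "g \<tau> * A \<tau> + M3 * s \<tau> > 0" using tau M3 sp by simp
    then obtain d where d: "d > 0" "\<forall>h>0. h < d \<longrightarrow> A \<tau> < A (\<tau> + h)"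
      using DERIV_pos_inc_right[OF der[rule_format, of \<tau>]] by blast
    define h where "h = min d (t2 - \<tau>) / 2"
    have h: "h > 0" "h < d" "h < t2 - \<tau>" using d tau by (auto simp: h_def)
    then have "A \<tau> < A (\<tau> + h)" using d by blast
    moreover have "A (\<tau> + h) < 0" using tau h by auto
    ultimately show False using tau by simp
  qed
  obtain N where N: "\<forall>t\<le>N. g t < 0" using evG unfolding eventually_at_bot_linorder by blast
  define T where "T = min N t2"
  have AT: "A T < 0" using neg by (simp add: T_def)
  have inc: "A t < A T" if tT: "t < T" for t
  proof -
    obtain z where z: "t < z" "z < T" "A T - A t = (T - t) * (g z * A z + M3 * s z)"
      using MVT2[OF tT, of A "\<lambda>t. g t * A t + M3 * s t"] der by blast
    have "g z < 0" using N z by (simp add: T_def)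
    moreover have "A z < 0" using neg z by (simp add: T_def)
    ultimately have "g z * A z > 0" by (simp add: mult_neg_neg)
    then have "g z * A z + M3 * s z > 0" using M3 sp[rule_format, of z] by (simp add: add_pos_pos)
    then have "(T - t) * (g z * A z + M3 * s z) > 0" using z by simp
    then show ?thesis using z by linarith
  qed
  have "eventually (\<lambda>t. A T < A t) at_bot" using order_tendstoD(1)[OF lim AT] .
  then obtain N2 where N2: "\<forall>t\<le>N2. A T < A t" unfolding eventually_at_bot_linorder by blast
  define t3 where "t3 = min N2 (T - 1)"
  have "A T < A t3" using N2 by (simp add: t3_def)
  moreover have "A t3 < A T" using inc by (simp add: t3_def)
  ultimately show False by simp
qed



lemma quad_pos:
  fixes a0 a1 a2 w :: real
  assumes "a0 > 0" "a2 > 0" "a1 \<ge> 0 \<or> a1^2 < 4 * a0 * a2" "w \<ge> 0"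
  shows "a0 + a1 * w + a2 * w^2 > 0"
proof (cases "a1 \<ge> 0")
  case True
  then show ?thesis using assms by (simp add: add_pos_nonneg)
next
  case False
  then have d: "a1^2 < 4 * a0 * a2" using assms by simp
  have "4 * a2 * (a0 + a1 * w + a2 * w^2) = (2 * a2 * w + a1)^2 + (4 * a0 * a2 - a1^2)"
    by (simp add: algebra_simps power2_eq_square)
  also have "\<dots> > 0" using d by (simp add: add_nonneg_pos)
  finally show ?thesis using assms(2) by (simp add: zero_less_mult_iff)
qed

lemma phi_face_alg:
  fixes p11 p12 p21 p22 M2 M3 kp c \<mu>1 \<mu>2 v A s :: real
  assumes pos: "p21 > 0" "p22 > 0" "M2 > 0" "M3 > 0" "kp > 0" "A > 0" "s > 0" and c0: "c \<ge> 0"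
    and face: "p22 * A^2 = kp * p21 * v^2 + c"
    and M: "kp * p21 * M2^2 \<le> p22 * M3^2"
    and poly: "c * (c-\<mu>2) + p21 * (c * (2 * kp - 1 - kp * (p12/p22)) - kp * \<mu>2 + kp * \<mu>1) * v^2
               + kp * p21 * (p11 - p21 + kp * p21 - kp * (p12/p22) * p21) * (v^2)^2 > 0"
  shows "2 * p22 * A * ((-\<mu>2 - p21 * v^2 + p22 * A^2) * A + M3 * s)
         - 2 * kp * p21 * v * ((-\<mu>1 - p11 * v^2 + p12 * A^2) * v - M2 * s) > 0"
proof -
  define r where "r = p12/p22"
  define X where "X = p22 * A^2"
  define w where "w = v^2"
  have pA: "p12 * A^2 = r * X" using pos by (simp add: r_def X_def)
  have Xw: "X = kp * p21 * w + c" using face by (simp add: X_def w_def)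
  have eq: "2 * p22 * A * ((-\<mu>2 - p21 * v^2 + p22 * A^2) * A + M3 * s)
         - 2 * kp * p21 * v * ((-\<mu>1 - p11 * v^2 + p12 * A^2) * v - M2 * s)
        = (2 * X * (-\<mu>2 - p21 * w + X) - 2 * kp * p21 * w * (-\<mu>1 - p11 * w + p12 * A^2))
          + 2 * s * (p22 * M3 * A + kp * p21 * M2 * v)"
    unfolding X_def w_def by (simp add: algebra_simps power2_eq_square)
  have eq2: "2 * X * (-\<mu>2 - p21 * w + X) - 2 * kp * p21 * w * (-\<mu>1 - p11 * w + r * X)
     = 2 * (c * (c-\<mu>2) + p21 * (c * (2 * kp - 1 - kp * r) - kp * \<mu>2 + kp * \<mu>1) * w
               + kp * p21 * (p11 - p21 + kp * p21 - kp * r * p21) * w^2)"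
    unfolding Xw by (simp add: algebra_simps power2_eq_square)
  have P0: "2 * X * (-\<mu>2 - p21 * w + X) - 2 * kp * p21 * w * (-\<mu>1 - p11 * w + r * X) > 0"
    unfolding eq2 using poly by (simp add: r_def w_def)
  have P: "2 * X * (-\<mu>2 - p21 * w + X) - 2 * kp * p21 * w * (-\<mu>1 - p11 * w + p12 * A^2) > 0"
    using P0 unfolding pA .
  have S: "p22 * M3 * A + kp * p21 * M2 * v \<ge> 0"
  proof (cases "v \<ge> 0")
    case True then show ?thesis using pos by simp
  next
    case False
    have "(kp * p21 * M2 * v)^2 = kp * p21 * (kp * p21 * M2^2) * v^2" by (simp add: power2_eq_square)
    also have "\<dots> \<le> kp * p21 * (p22 * M3^2) * v^2"
      using M pos by (intro mult_right_mono mult_left_mono) auto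
    also have "\<dots> = p22 * M3^2 * (kp * p21 * v^2)" by simp
    also have "\<dots> \<le> p22 * M3^2 * (p22 * A^2)"
      using face pos(2) pos(4) c0 by (intro mult_left_mono) auto
    also have "\<dots> = (p22 * M3 * A)^2" by (simp add: power2_eq_square)
    finally have "\<bar>kp * p21 * M2 * v\<bar> \<le> \<bar>p22 * M3 * A\<bar>" using abs_le_square_iff by blast
    moreover have pp: "p22 * M3 * A > 0" using pos by simp
    ultimately show ?thesis using abs_ge_minus_self[of "kp * p21 * M2 * v"] abs_of_pos[OF pp] by linarith
  qed
  show ?thesis unfolding eq using P S pos by (simp add: add_pos_nonneg)
qed



lemma poly_pos:
  fixes p11 p12 p21 p22 kp k m c \<mu>1 \<mu>2 w :: real
  assumes p: "p21 > 0" "p22 > 0" "m > 0" "\<bar>\<mu>1\<bar> \<le> m" "\<bar>\<mu>2\<bar> \<le> m"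
    and D: "p11 - (p12/p22) * p21 > 0" and k: "k \<ge> 2" "(k - 1) * kp * (p11 - (p12/p22) * p21) > p21"
    and cs: "(kp = 1 \<and> p12/p22 \<le> 1) \<or> (kp * (p12/p22) = 1 \<and> p12/p22 > 1)"
    and w: "w \<ge> 0" and c: "c = k * m"
  shows "c * (c-\<mu>2) + p21 * (c * (2 * kp - 1 - kp * (p12/p22)) - kp * \<mu>2 + kp * \<mu>1) * w
        + kp * p21 * (p11 - p21 + kp * p21 - kp * (p12/p22) * p21) * w^2 > 0"
proof -
  define r where "r = p12/p22"
  define DD where "DD = p11 - r * p21"
  define a0 where "a0 = c * (c-\<mu>2)"
  define a1 where "a1 = p21 * (c * (2 * kp - 1 - kp * r) - kp * \<mu>2 + kp * \<mu>1)"
  define a2 where "a2 = kp * p21 * (p11 - p21 + kp * p21 - kp * r * p21)"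
  have DD: "DD > 0" using D by (simp add: DD_def r_def)
  have k2: "(k - 1) * kp * DD > p21" using k by (simp add: DD_def r_def)
  have cm: "c - \<mu>2 \<ge> (k - 1) * m" using p k c by (simp add: algebra_simps)
  have km: "(k-1) * m > 0" using k p by simp
  have cpos: "c > 0" using c k p by simp
  have a0b: "a0 \<ge> c * ((k - 1) * m)" unfolding a0_def using cm cpos by (simp add: mult_left_mono)
  have a0pos: "a0 > 0" using a0b cpos km by (smt (verit) mult_pos_pos)
  have key: "a2 > 0 \<and> (a1 \<ge> 0 \<or> a1^2 < 4 * a0 * a2)"
  proof (cases "kp = 1 \<and> r \<le> 1")
    case True
    then have kp1: "kp = 1" and r1: "r \<le> 1" by auto
    have a2e: "a2 = p21 * DD" unfolding a2_def DD_def kp1 by (simp add: algebra_simps)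
    have a2p: "a2 > 0" using a2e p DD by simp
    have "a1 \<ge> 0 \<or> a1^2 < 4 * a0 * a2"
    proof (cases "a1 \<ge> 0")
      case True then show ?thesis by simp
    next
      case False
      have "c * (1 - r) \<ge> 0" using cpos r1 by simp
      moreover have "- m \<le> \<mu>1" "\<mu>2 \<le> m" using p(4) p(5) by (auto simp: abs_le_iff)
      ultimately have h: "\<mu>2 - \<mu>1 - c * (1 - r) \<le> 2 * m" by linarith
      have ea: "- a1 = p21 * (\<mu>2 - \<mu>1 - c * (1 - r))" by (simp add: a1_def kp1 algebra_simps)
      have "- a1 \<le> p21 * (2 * m)" unfolding ea using h p(1) by (simp add: mult_left_mono)
      then have "(- a1)^2 \<le> (p21 * (2 * m))^2" using False by (intro power_mono) auto
      then have "a1^2 \<le> (2 * p21 * m)^2" by (simp add: algebra_simps)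
      also have "\<dots> = 4 * m^2 * (p21 * p21)" by (simp add: power2_eq_square)
      also have "\<dots> < 4 * m^2 * ((k * (k-1) * DD) * p21)"
      proof -
        have "k * ((k-1) * DD) \<ge> 1 * ((k-1) * DD)" using k k2 kp1 p(1) by (intro mult_right_mono) auto
        then have "k * (k-1) * DD > p21" using k2 kp1 by simp
        then show ?thesis using p by simp
      qed
      also have "\<dots> = 4 * (k * m * ((k-1) * m)) * a2" unfolding a2e by (simp add: power2_eq_square algebra_simps)
      also have "\<dots> \<le> 4 * a0 * a2" using a0b a2p c by simp
      finally show ?thesis by simp
    qed
    then show ?thesis using a2p by simp
  next
    case False
    then have kr: "kp * r = 1" and r1: "r > 1" using cs by (auto simp: r_def)
    have kpe: "kp = 1 / r" using kr r1 by (simp add: field_simps)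
    have kpos: "kp > 0" using kpe r1 by simp
    have klt: "kp < 1" using kpe r1 by simp
    have a2e: "a2 = kp * p21 * DD + p21^2 * (1 - kp)^2"
    proof -
      have "a2 = kp * p21 * (DD + r * p21 - 2 * p21 + kp * p21)"
        unfolding a2_def DD_def using kr by (simp add: algebra_simps)
      also have "\<dots> = kp * p21 * DD + (kp * r) * p21^2 - 2 * kp * p21^2 + kp^2 * p21^2"
        by (simp add: algebra_simps power2_eq_square)
      also have "\<dots> = kp * p21 * DD + p21^2 * (1 - kp)^2" using kr by (simp add: algebra_simps power2_eq_square)
      finally show ?thesis .
    qed
    have a2p: "a2 > 0" using a2e kpos p DD by (simp add: add_pos_nonneg)
    have a1e: "a1 = p21 * (- 2 * c * (1 - kp) + kp * (\<mu>1 - \<mu>2))"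
      unfolding a1_def using kr by (simp add: algebra_simps)
    have "\<bar>\<mu>1 - \<mu>2\<bar> \<le> 2 * m" using p(4) p(5) by (auto simp: abs_le_iff)
    then have ab: "\<bar>kp * (\<mu>1 - \<mu>2)\<bar> \<le> kp * (2 * m)"
      using kpos by (simp add: abs_mult mult_left_mono)
    have "\<bar>- 2 * c * (1 - kp) + kp * (\<mu>1 - \<mu>2)\<bar> \<le> \<bar>- 2 * c * (1 - kp)\<bar> + \<bar>kp * (\<mu>1 - \<mu>2)\<bar>"
      by (rule abs_triangle_ineq)
    also have "\<bar>- 2 * c * (1 - kp)\<bar> = 2 * c * (1 - kp)" using cpos klt by (simp add: abs_mult)
    finally have "\<bar>- 2 * c * (1 - kp) + kp * (\<mu>1 - \<mu>2)\<bar> \<le> 2 * c * (1 - kp) + kp * (2 * m)"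
      using ab by linarith
    then have "\<bar>a1\<bar> \<le> p21 * (2 * c * (1 - kp) + kp * (2 * m))"
      unfolding a1e using p(1) by (simp add: abs_mult mult_left_mono)
    also have "\<dots> = 2 * p21 * m * (k * (1 - kp) + kp)" unfolding c by (simp add: algebra_simps)
    finally have a1b: "\<bar>a1\<bar> \<le> 2 * p21 * m * (k * (1 - kp) + kp)" .
    have "a1^2 \<le> (2 * p21 * m * (k * (1 - kp) + kp))^2"
    proof -
      have "\<bar>a1\<bar>^2 \<le> (2 * p21 * m * (k * (1 - kp) + kp))^2" using a1b by (intro power_mono) auto
      then show ?thesis by simp
    qed
    also have "\<dots> = 4 * m^2 * (p21^2 * (k^2 * (1-kp)^2 + 2 * k * kp * (1 - kp) + kp^2))"
      by (simp add: power2_eq_square algebra_simps)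
    also have "\<dots> < 4 * m^2 * (k * (k-1) * (kp * p21 * DD + p21^2 * (1 - kp)^2))"
    proof -
      have e: "k * (k-1) * (kp * p21 * DD + p21^2 * (1 - kp)^2) - p21^2 * (k^2 * (1-kp)^2 + 2 * k * kp * (1 - kp) + kp^2)
          = p21 * (k * ((k-1) * kp * DD) - p21 * (k * (1 - kp^2) + kp^2))"
        by (simp add: power2_eq_square algebra_simps)
      have "kp^2 * (k - 1) \<ge> 0" using k by simp
      then have "k * (1 - kp^2) + kp^2 \<le> k" by (simp add: algebra_simps)
      then have "p21 * (k * (1 - kp^2) + kp^2) \<le> p21 * k" using p by simp
      also have "\<dots> < k * ((k-1) * kp * DD)" using k2 k p by (simp add: mult.commute)
      finally have "p21 * (k * ((k-1) * kp * DD) - p21 * (k * (1 - kp^2) + kp^2)) > 0" using p by simp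
      then show ?thesis using e p by simp
    qed
    also have "\<dots> = 4 * (k * m * ((k-1) * m)) * a2" unfolding a2e by (simp add: power2_eq_square algebra_simps)
    also have "\<dots> \<le> 4 * a0 * a2" using a0b a2p c by simp
    finally show ?thesis using a2p by simp
  qed
  have "a0 + a1 * w + a2 * w^2 > 0" using quad_pos[of a0 a2 a1 w] key a0pos w by simp
  then show ?thesis by (simp add: a0_def a1_def a2_def r_def)
qed



lemma Q_face_alg:
  fixes F v s \<epsilon> m \<alpha> M1 M2 D p11 R ll b f K1 :: real
  assumes pos: "\<alpha> > 0" "M2 > 0" "p11 > 0" "D > 0" "\<epsilon> > 0" "R \<ge> 0"
    and m: "m = \<epsilon>^2"
    and H1: "F \<le> R * m - D * v^2" and H2: "F \<ge> - p11 * v^2"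
    and H3: "v^2 + \<epsilon> * v + (M2/\<alpha>) * s = ll * m" and H4: "s > 0"
    and b: "b = R/D + 1/4" and f: "f = R + p11 * b" and l: "ll \<ge> 3 * b + 1"
    and K1: "K1 = 2 * \<bar>M1\<bar> * (ll + 1/4)^2 * \<alpha>^2 / M2 + f * (5/2 * b + 1/2)"
    and sm1: "\<epsilon> * (2 * \<bar>M1\<bar> * (ll + 1/4) * \<alpha> / M2) < 1"
    and sm2: "\<epsilon> * (2 * K1 / (ll * \<alpha>)) < 1"
  shows "2 * M1 * M2 * s^2 + F * v * (2 * v + \<epsilon>) - \<epsilon> * M2 * s < 0"
proof -
  have mpos: "m > 0" using m pos by simp
  have b0: "b \<ge> 1/4" using b pos by simp
  have lpos: "ll > 0" using l b0 by linarith
  have sq: "v^2 + \<epsilon> * v \<ge> - m/4"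
  proof -
    have "0 \<le> (v + \<epsilon>/2)^2" by simp
    also have "(v + \<epsilon>/2)^2 = v^2 + \<epsilon> * v + m/4" unfolding m by (simp add: power2_eq_square algebra_simps)
    finally show ?thesis by simp
  qed
  have sM: "(M2/\<alpha>) * s = ll * m - v^2 - \<epsilon> * v" using H3 by simp
  have sup1: "(M2/\<alpha>) * s \<le> (ll + 1/4) * m" using sM sq by (simp add: algebra_simps)
  define S where "S = (ll + 1/4) * m * \<alpha> / M2"
  have sS: "s \<le> S"
  proof -
    have "M2 * s \<le> (ll + 1/4) * m * \<alpha>" using sup1 pos by (simp add: pos_divide_le_eq)
    then show ?thesis unfolding S_def using pos by (simp add: pos_le_divide_eq mult.commute)
  qed
  have S2: "2 * \<bar>M1\<bar> * S = \<epsilon> * (\<epsilon> * (2 * \<bar>M1\<bar> * (ll + 1/4) * \<alpha> / M2))"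
    unfolding S_def m by (simp add: power2_eq_square)
  have S2lt: "2 * \<bar>M1\<bar> * S < \<epsilon>"
    using mult_strict_left_mono[OF sm1 pos(5)] unfolding S2 by simp
  have M1s: "2 * M1 * M2 * s^2 \<le> M2 * s * (2 * \<bar>M1\<bar> * s)"
  proof -
    have "2 * M1 * M2 * s^2 \<le> 2 * \<bar>M1\<bar> * M2 * s^2" using pos H4 by (intro mult_right_mono) auto
    then show ?thesis by (simp add: power2_eq_square algebra_simps)
  qed
  have M1S: "2 * \<bar>M1\<bar> * s \<le> 2 * \<bar>M1\<bar> * S" using sS by (simp add: mult_left_mono)
  show ?thesis
  proof (cases "v * (2 * v + \<epsilon>) \<ge> 0 \<and> D * v^2 \<ge> R * m")
    case True
    then have "F \<le> 0" using H1 by linarith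
    then have "F * v * (2 * v + \<epsilon>) \<le> 0" using True by (simp add: mult.assoc mult_nonpos_nonneg)
    moreover have "M2 * s * (2 * \<bar>M1\<bar> * s) < M2 * s * \<epsilon>"
      using M1S S2lt pos H4 by (intro mult_strict_left_mono) auto
    ultimately show ?thesis using M1s by (simp add: algebra_simps)
  next
    case False
    have vb: "v^2 \<le> b * m"
    proof (cases "v * (2 * v + \<epsilon>) \<ge> 0")
      case True
      then have "D * v^2 < R * m" using False by simp
      then have "v^2 < R * m / D" using pos by (simp add: field_simps)
      also have "\<dots> \<le> b * m" using b mpos pos by (simp add: field_simps)
      finally show ?thesis by simp
    next
      case c2: False
      then have "v * (2 * v + \<epsilon>) < 0" by simp
      then have "v < 0 \<and> 2 * v + \<epsilon> > 0" using pos(5) unfolding mult_less_0_iff by auto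
      then have "v < 0" "2 * v + \<epsilon> > 0" by auto
      then have "\<bar>v\<bar> \<le> \<epsilon> / 2" by simp
      then have "\<bar>v\<bar>^2 \<le> (\<epsilon>/2)^2" by (intro power_mono) auto
      then have "v^2 \<le> m / 4" unfolding m by (simp add: power2_eq_square)
      also have "\<dots> \<le> b * m" using b0 mpos by simp
      finally show ?thesis .
    qed
    have ev: "\<epsilon> * \<bar>v\<bar> \<le> (m + v^2) / 2"
    proof -
      have "0 \<le> (\<epsilon> - \<bar>v\<bar>)^2" by simp
      then show ?thesis unfolding m by (simp add: power2_eq_square algebra_simps)
    qed
    have Fb: "\<bar>F\<bar> \<le> f * m"
    proof -
      have "D * v^2 \<ge> 0" using pos by simp
      then have "F \<le> R * m" using H1 by linarith
      moreover have "p11 * v^2 \<le> p11 * (b * m)" using vb pos by (simp add: mult_left_mono)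
      moreover have "R * m \<ge> 0" using pos mpos by simp
      moreover have "p11 * (b * m) \<ge> 0" using pos mpos b0 by simp
      moreover have "f * m = R * m + p11 * (b * m)" using f by (simp add: algebra_simps)
      ultimately show ?thesis using H2 by (simp add: abs_le_iff)
    qed
    have vv: "\<bar>v * (2 * v + \<epsilon>)\<bar> \<le> (5/2 * b + 1/2) * m"
    proof -
      have "\<bar>v * (2 * v + \<epsilon>)\<bar> = \<bar>2 * v^2 + \<epsilon> * v\<bar>" by (simp add: power2_eq_square algebra_simps)
      also have "\<dots> \<le> \<bar>2 * v^2\<bar> + \<bar>\<epsilon> * v\<bar>" by (rule abs_triangle_ineq)
      also have "\<dots> = 2 * v^2 + \<epsilon> * \<bar>v\<bar>" using pos by (simp add: abs_mult)
      also have "\<dots> \<le> 5/2 * v^2 + m/2" using ev by simp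
      also have "\<dots> \<le> (5/2 * b + 1/2) * m" using vb by (simp add: algebra_simps)
      finally show ?thesis .
    qed
    have Fterm: "F * v * (2 * v + \<epsilon>) \<le> f * (5/2 * b + 1/2) * m^2"
    proof -
      have "F * v * (2 * v + \<epsilon>) \<le> \<bar>F\<bar> * \<bar>v * (2 * v + \<epsilon>)\<bar>"
        by (simp add: abs_mult[symmetric] mult.assoc)
      also have "\<dots> \<le> (f * m) * ((5/2 * b + 1/2) * m)" using Fb vv by (intro mult_mono) auto
      finally show ?thesis by (simp add: power2_eq_square algebra_simps)
    qed
    have slow: "s \<ge> ll * m * \<alpha> / (2 * M2)"
    proof -
      have "\<epsilon> * v \<le> \<epsilon> * \<bar>v\<bar>" using pos by (simp add: mult_left_mono)
      then have "(M2/\<alpha>) * s \<ge> ll * m - v^2 - \<epsilon> * \<bar>v\<bar>" using sM by linarith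
      moreover have "ll * m \<ge> (3 * b + 1) * m" using l mpos by (simp add: mult_right_mono)
      then have "ll * m \<ge> 3 * (b * m) + m" by (simp add: algebra_simps)
      ultimately have "(M2/\<alpha>) * s \<ge> ll * m / 2" using ev vb by argo
      then have "M2 * s \<ge> ll * m * \<alpha> / 2" using pos by (simp add: field_simps)
      then show ?thesis using pos by (simp add: field_simps)
    qed
    have M1term: "2 * M1 * M2 * s^2 \<le> 2 * \<bar>M1\<bar> * (ll + 1/4)^2 * \<alpha>^2 / M2 * m^2"
    proof -
      have "2 * M1 * M2 * s^2 \<le> 2 * \<bar>M1\<bar> * M2 * s^2" using pos H4 by (intro mult_right_mono) auto
      also have "\<dots> \<le> 2 * \<bar>M1\<bar> * M2 * S^2" using sS H4 pos by (intro mult_left_mono power_mono) auto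
      also have "\<dots> = 2 * \<bar>M1\<bar> * (ll + 1/4)^2 * \<alpha>^2 / M2 * m^2" unfolding S_def using pos
        by (simp add: power2_eq_square field_simps)
      finally show ?thesis .
    qed
    have tot: "2 * M1 * M2 * s^2 + F * v * (2 * v + \<epsilon>) \<le> K1 * m^2"
      using M1term Fterm K1 by (simp add: algebra_simps)
    have "K1 * m^2 = (\<epsilon> * K1) * (\<epsilon> * m)" unfolding m by (simp add: power2_eq_square)
    also have "\<dots> < (ll * \<alpha> / 2) * (\<epsilon> * m)"
    proof -
      have "\<epsilon> * K1 < ll * \<alpha> / 2" using sm2 lpos pos by (simp add: field_simps)
      then show ?thesis using pos mpos by (intro mult_strict_right_mono) auto
    qed
    also have "\<dots> = \<epsilon> * M2 * (ll * m * \<alpha> / (2 * M2))" using pos by (simp add: field_simps)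
    also have "\<dots> \<le> \<epsilon> * M2 * s" using slow pos by (intro mult_left_mono) auto
    finally show ?thesis using tot by linarith
  qed
qed



theorem lemma5:
  fixes \<alpha> M1 M2 M3 p11 p12 p21 p22 :: real
  assumes "standing_assms \<alpha> M2 M3 p11 p12 p21 p22"
  shows "\<exists>C>0. \<exists>\<delta>>0. \<forall>\<mu>1 \<mu>2 v A s.
           sqrt (\<mu>1^2 + \<mu>2^2) < \<delta> \<longrightarrow> \<mu>1 < 0 \<longrightarrow> \<mu>2 > p21 * \<mu>1 / p11 \<longrightarrow>
           the_solution \<alpha> M1 M2 M3 p11 p12 p21 p22 \<mu>1 \<mu>2 v A s \<longrightarrow>
           preservation p11 \<mu>1 v A s \<longrightarrow>
           (\<forall>t>0. \<bar>v t\<bar> \<le> C * sqrt (sqrt (\<mu>1^2 + \<mu>2^2))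
                 \<and> \<bar>s t\<bar> \<le> C * sqrt (\<mu>1^2 + \<mu>2^2))"
proof -
  have pos: "\<alpha> > 0" "M2 > 0" "M3 > 0" "p11 > 0" "p12 > 0" "p21 > 0" "p22 > 0"
    and pp: "p12 * p21 < p11 * p22"
    and MM: "M3 / M2 > sqrt (3 * p21 / p22)"
    using assms unfolding standing_assms_def by auto
  have M3sq: "3 * p21 * M2^2 < p22 * M3^2"
  proof -
    have "3 * p21 / p22 = (sqrt (3 * p21 / p22))^2" using pos by simp
    also have "\<dots> < (M3 / M2)^2" using MM pos by (intro power_strict_mono) auto
    finally have "3 * p21 / p22 < M3^2 / M2^2" by (simp add: power_divide)
    then show ?thesis using pos by (simp add: field_simps)
  qed
  define r where "r = p12 / p22"
  define D where "D = p11 - r * p21"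
  define kp where "kp = (if r \<le> 1 then 1 else 1 / r)"
  define k where "k = 2 + 4 * p21 / (kp * D)"
  define R where "R = 1 + r * k"
  define b where "b = R / D + 1/4"
  define f where "f = R + p11 * b"
  define ll where "ll = 3 * b + 2 / p11 + 1"
  define K1 where "K1 = 2 * \<bar>M1\<bar> * (ll + 1/4)^2 * \<alpha>^2 / M2 + f * (5/2 * b + 1/2)"
  define E0 where "E0 = 1 / (1 + 2 * K1 / (ll * \<alpha>) + 2 * \<bar>M1\<bar> * (ll + 1/4) * \<alpha> / M2)"
  define C where "C = 2 * ll + 1 + (ll + 1) * \<alpha> / M2"
  have rpos: "r > 0" using pos by (simp add: r_def)
  have Dpos: "D > 0" using pp pos by (simp add: D_def r_def field_simps)
  have kp: "kp > 0" "kp \<le> 1" "(kp = 1 \<and> r \<le> 1) \<or> (kp * r = 1 \<and> r > 1)"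
    using rpos by (auto simp: kp_def)
  have kge: "k \<ge> 2" using pos kp Dpos by (simp add: k_def)
  have k2: "(k - 1) * kp * D > p21"
  proof -
    have "(k - 1) * kp * D = kp * D + 4 * p21" using kp Dpos by (simp add: k_def field_simps)
    then show ?thesis using kp Dpos pos by (simp add: add_pos_pos)
  qed
  have Rpos: "R \<ge> 0" using rpos kge by (simp add: R_def)
  have bpos: "b > 0" using Rpos Dpos by (simp add: b_def add_nonneg_pos)
  have p11i: "2 / p11 > 0" using pos by simp
  have llpos: "ll > 0" unfolding ll_def using bpos p11i by linarith
  have "p11 * b \<ge> 0" using pos bpos by simp
  then have fpos: "f \<ge> 0" using Rpos unfolding f_def by linarith
  have t1: "2 * \<bar>M1\<bar> * (ll + 1/4)^2 * \<alpha>^2 / M2 \<ge> 0" using pos by simp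
  have "5/2 * b + 1/2 \<ge> 0" using bpos by simp
  then have t2: "f * (5/2 * b + 1/2) \<ge> 0" using fpos by simp
  have K1pos: "K1 \<ge> 0" unfolding K1_def using t1 t2 by linarith
  define a1 where "a1 = 2 * K1 / (ll * \<alpha>)"
  define a2 where "a2 = 2 * \<bar>M1\<bar> * (ll + 1/4) * \<alpha> / M2"
  have a1pos: "a1 \<ge> 0" unfolding a1_def using K1pos llpos pos by simp
  have "ll + 1/4 > 0" using llpos by simp
  then have a2pos: "a2 \<ge> 0" unfolding a2_def using pos by simp
  have E0e: "E0 = 1 / (1 + a1 + a2)" by (simp add: E0_def a1_def a2_def)
  have den: "1 + a1 + a2 > 0" using a1pos a2pos by linarith
  have E0pos: "E0 > 0" unfolding E0e using den by simp
  have E0eq: "E0 * (1 + a1 + a2) = 1" unfolding E0e using den by simp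
  have small: "\<epsilon> * a1 < 1 \<and> \<epsilon> * a2 < 1" if "0 < \<epsilon>" "\<epsilon> < E0" for \<epsilon>
  proof -
    have "\<epsilon> * a1 \<le> E0 * a1" "\<epsilon> * a2 \<le> E0 * a2" using that a1pos a2pos by (auto intro: mult_right_mono)
    moreover have "E0 * a1 + E0 * a2 = 1 - E0" using E0eq by (simp add: algebra_simps)
    moreover have "E0 * a1 \<ge> 0" "E0 * a2 \<ge> 0" using E0pos a1pos a2pos by auto
    ultimately show ?thesis using E0pos by linarith
  qed
  have Cpos: "C > 0" using llpos pos by (simp add: C_def add_pos_nonneg)
  show ?thesis
  proof (rule exI[of _ C], intro conjI Cpos, rule exI[of _ "E0^2"], intro conjI allI impI)
    show "E0^2 > 0" using E0pos by simp
    fix \<mu>1 \<mu>2 :: real and v A s :: "real \<Rightarrow> real" and t :: real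
    assume mlt: "sqrt (\<mu>1^2 + \<mu>2^2) < E0^2" and mu1: "\<mu>1 < 0" and mu2: "\<mu>2 > p21 * \<mu>1 / p11"
      and sol: "the_solution \<alpha> M1 M2 M3 p11 p12 p21 p22 \<mu>1 \<mu>2 v A s"
      and pres: "preservation p11 \<mu>1 v A s" and "t > 0"
    define m where "m = sqrt (\<mu>1^2 + \<mu>2^2)"
    define \<epsilon> where "\<epsilon> = sqrt m"
    have mpos: "m > 0" using mu1 by (simp add: m_def add_pos_nonneg)
    have epos: "\<epsilon> > 0" using mpos by (simp add: \<epsilon>_def)
    have meps: "m = \<epsilon>^2" using mpos by (simp add: \<epsilon>_def)
    have eE: "\<epsilon> < E0" using mlt E0pos unfolding \<epsilon>_def m_def
      by (metis real_sqrt_less_iff real_sqrt_pow2 power2_eq_square real_sqrt_mult_self abs_of_pos real_sqrt_abs)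
    have sm: "\<epsilon> * a1 < 1" "\<epsilon> * a2 < 1" using small[OF epos eE] by auto
    have mu1b: "\<bar>\<mu>1\<bar> \<le> m" unfolding m_def by (rule real_le_rsqrt) simp
    have mu2b: "\<bar>\<mu>2\<bar> \<le> m" unfolding m_def by (rule real_le_rsqrt) simp
    define e where "e = v_ep2 p11 \<mu>1"
    have mp: "\<mu>1 / p11 < 0" using mu1 pos(4) by (rule divide_neg_pos)
    have e2: "e^2 = - \<mu>1 / p11" using mp by (simp add: e_def v_ep2_def)
    have e_pos: "e > 0" using mp by (simp add: e_def v_ep2_def)
    have issol: "is_sol \<alpha> M1 M2 M3 p11 p12 p21 p22 \<mu>1 \<mu>2 v A s"
      and limb: "((\<lambda>t. (v t, A t, s t)) \<longlongrightarrow> (e, 0, 0)) at_bot"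
      and evs: "\<forall>\<^sub>F t in at_bot. s t > 0"
      using sol by (auto simp: the_solution_def e_def)
    have limt: "((\<lambda>t. (v t, A t, s t)) \<longlongrightarrow> (- e, 0, 0)) at_top"
      using pres by (simp add: preservation_def e_def)
    define Vd where "Vd t = (- \<mu>1 - p11 * (v t)^2 + p12 * (A t)^2) * v t - M2 * s t" for t
    define Ad where "Ad t = (- \<mu>2 - p21 * (v t)^2 + p22 * (A t)^2) * A t + M3 * s t" for t
    define Sd where "Sd t = 2 * \<alpha> * (v t + M1 * s t) * s t" for t
    have dv: "\<forall>t. (v has_real_derivative Vd t) (at t)"
      and dA: "\<forall>t. (A has_real_derivative Ad t) (at t)"
      and ds: "\<forall>t. (s has_real_derivative Sd t) (at t)"
      using issol by (auto simp: is_sol_def Vd_def Ad_def Sd_def)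
    have cv: "\<And>t. isCont v t" using dv DERIV_isCont by blast
    have cA: "\<And>t. isCont A t" using dA DERIV_isCont by blast
    have cs: "\<And>t. isCont s t" using ds DERIV_isCont by blast
    have "((\<lambda>t. fst (v t, A t, s t)) \<longlongrightarrow> fst (e, 0::real, 0::real)) at_bot" by (rule tendsto_fst[OF limb])
    then have vbot: "(v \<longlongrightarrow> e) at_bot" by simp
    have "((\<lambda>t. fst (snd (v t, A t, s t))) \<longlongrightarrow> fst (snd (e, 0::real, 0::real))) at_bot"
      by (rule tendsto_fst[OF tendsto_snd[OF limb]])
    then have Abot: "(A \<longlongrightarrow> 0) at_bot" by simp
    have "((\<lambda>t. snd (snd (v t, A t, s t))) \<longlongrightarrow> snd (snd (e, 0::real, 0::real))) at_bot"
      by (rule tendsto_snd[OF tendsto_snd[OF limb]])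
    then have sbot: "(s \<longlongrightarrow> 0) at_bot" by simp
    have "((\<lambda>t. fst (v t, A t, s t)) \<longlongrightarrow> fst (- e, 0::real, 0::real)) at_top" by (rule tendsto_fst[OF limt])
    then have vtop: "(v \<longlongrightarrow> - e) at_top" by simp
    have "((\<lambda>t. fst (snd (v t, A t, s t))) \<longlongrightarrow> fst (snd (- e, 0::real, 0::real))) at_top"
      by (rule tendsto_fst[OF tendsto_snd[OF limt]])
    then have Atop: "(A \<longlongrightarrow> 0) at_top" by simp
    have spos: "s x > 0" for x
    proof (rule s_pos[of s "\<lambda>t. 2 * \<alpha> * (v t + M1 * s t)"])
      show "\<forall>t. (s has_real_derivative (2 * \<alpha> * (v t + M1 * s t)) * s t) (at t)"
        using ds by (simp add: Sd_def)
      show "\<forall>t. isCont (\<lambda>t. 2 * \<alpha> * (v t + M1 * s t)) t" using cv cs by (auto intro!: continuous_intros)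
      show "\<forall>\<^sub>F t in at_bot. 0 < s t" using evs .
    qed
    have Apos: "A x > 0" for x
    proof (rule A_pos[of A "\<lambda>t. - \<mu>2 - p21 * (v t)^2 + p22 * (A t)^2" M3 s])
      show "\<forall>t. (A has_real_derivative (- \<mu>2 - p21 * (v t)^2 + p22 * (A t)^2) * A t + M3 * s t) (at t)"
        using dA by (simp add: Ad_def)
      show "M3 > 0" using pos by simp
      show "\<forall>t. s t > 0" using spos by simp
      show "(A \<longlongrightarrow> 0) at_bot" using Abot .
      have "((\<lambda>t. - \<mu>2 - p21 * (v t)^2 + p22 * (A t)^2) \<longlongrightarrow> - \<mu>2 - p21 * e^2 + p22 * 0^2) at_bot"
        using vbot Abot by (intro tendsto_intros)
      moreover have "- \<mu>2 - p21 * e^2 + p22 * 0^2 < 0"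
      proof -
        have "p21 * e^2 = - (p21 * \<mu>1 / p11)" using e2 by simp
        then show ?thesis using mu2 by simp
      qed
      ultimately show "\<forall>\<^sub>F t in at_bot. - \<mu>2 - p21 * (v t)^2 + p22 * (A t)^2 < 0"
        by (rule order_tendstoD(2))
    qed
    \<comment> \<open>the escape region is never entered\<close>
    define c where "c = k * m"
    have cpos: "c > 0" using kge mpos by (simp add: c_def)
    define Phi where "Phi t = p22 * (A t)^2 - kp * p21 * (v t)^2 - c" for t
    define Phid where "Phid t = 2 * p22 * A t * Ad t - 2 * kp * p21 * v t * Vd t" for t
    have dPhi: "\<forall>t. (Phi has_real_derivative Phid t) (at t)"
    proof
      fix t
      show "(Phi has_real_derivative Phid t) (at t)"
        unfolding Phi_def[abs_def] Phid_def
        by (auto intro!: derivative_eq_intros dA[rule_format] dv[rule_format] simp: algebra_simps)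
    qed
    have Phiface: "\<forall>t. Phi t = 0 \<longrightarrow> Phid t > 0"
    proof (intro allI impI)
      fix t assume "Phi t = 0"
      then have face: "p22 * (A t)^2 = kp * p21 * (v t)^2 + c" by (simp add: Phi_def)
      have poly: "c * (c - \<mu>2) + p21 * (c * (2 * kp - 1 - kp * (p12/p22)) - kp * \<mu>2 + kp * \<mu>1) * (v t)^2
        + kp * p21 * (p11 - p21 + kp * p21 - kp * (p12/p22) * p21) * ((v t)^2)^2 > 0"
        using poly_pos[of p21 p22 m \<mu>1 \<mu>2 p11 p12 k kp "(v t)^2" c] pos mpos mu1b mu2b Dpos kge k2 kp
        by (simp add: D_def r_def c_def)
      have M: "kp * p21 * M2^2 \<le> p22 * M3^2"
      proof -
        have h: "kp * (p21 * M2^2) \<le> 1 * (p21 * M2^2)" using kp pos by (intro mult_right_mono) auto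
        have h2: "kp * p21 * M2^2 \<le> p21 * M2^2" using h by (simp only: mult.assoc mult_1_left)
        have "p21 * M2^2 \<ge> 0" using pos by simp
        then show ?thesis using M3sq h2 by linarith
      qed
      show "Phid t > 0" unfolding Phid_def Ad_def Vd_def
        using phi_face_alg[OF pos(6) pos(7) pos(2) pos(3) kp(1) Apos spos less_imp_le[OF cpos] face M poly] .
    qed
    have Phitop: "\<forall>\<^sub>F t in at_top. Phi t < 0"
    proof -
      have "(Phi \<longlongrightarrow> p22 * 0^2 - kp * p21 * (- e)^2 - c) at_top"
        unfolding Phi_def[abs_def] using vtop Atop by (intro tendsto_intros)
      moreover have "p22 * 0^2 - kp * p21 * (- e)^2 - c < 0"
      proof -
        have "kp * p21 * e^2 \<ge> 0" using kp pos by simp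
        then show ?thesis using cpos by simp
      qed
      ultimately show ?thesis by (rule order_tendstoD(2))
    qed
    have Phineg: "Phi x < 0" for x by (rule trap_forward[OF dPhi Phiface Phitop])
    define L where "L = ll * m"
    define Q where "Q t = (v t)^2 + \<epsilon> * v t + (M2 / \<alpha>) * s t" for t
    define Qd where "Qd t = 2 * v t * Vd t + \<epsilon> * Vd t + (M2 / \<alpha>) * Sd t" for t
    have dQ: "\<forall>t. (Q has_real_derivative Qd t) (at t)"
    proof
      fix t
      show "(Q has_real_derivative Qd t) (at t)"
        unfolding Q_def[abs_def] Qd_def
        using pos(1) by (auto intro!: derivative_eq_intros ds[rule_format] dv[rule_format] simp: algebra_simps)
    qed
    have Qface: "\<forall>t. Q t = L \<longrightarrow> Qd t < 0"
    proof (intro allI impI)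
      fix t assume QL: "Q t = L"
      define F where "F = - \<mu>1 - p11 * (v t)^2 + p12 * (A t)^2"
      have Qde: "Qd t = 2 * M1 * M2 * (s t)^2 + F * v t * (2 * v t + \<epsilon>) - \<epsilon> * M2 * s t"
        unfolding Qd_def Vd_def Sd_def F_def using pos by (simp add: field_simps power2_eq_square)
      have H1: "F \<le> R * m - D * (v t)^2"
      proof -
        have "p22 * (A t)^2 < kp * p21 * (v t)^2 + c" using Phineg[of t] by (simp add: Phi_def)
        then have "r * (p22 * (A t)^2) \<le> r * (kp * p21 * (v t)^2 + c)" using rpos by simp
        moreover have "r * (p22 * (A t)^2) = p12 * (A t)^2" using pos by (simp add: r_def)
        moreover have "r * (kp * p21 * (v t)^2 + c) = r * kp * p21 * (v t)^2 + r * c" by (simp add: algebra_simps)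
        ultimately have h1: "p12 * (A t)^2 \<le> r * kp * p21 * (v t)^2 + r * c" by linarith
        have "kp * (r * p21 * (v t)^2) \<le> 1 * (r * p21 * (v t)^2)" using kp rpos pos by (intro mult_right_mono) auto
        then have h2: "r * kp * p21 * (v t)^2 \<le> r * p21 * (v t)^2" by (simp add: algebra_simps)
        have h3: "R * m - D * (v t)^2 = m + r * c - p11 * (v t)^2 + r * p21 * (v t)^2"
          by (simp add: R_def D_def c_def algebra_simps)
        have "- \<mu>1 \<le> m" using mu1b by simp
        then show ?thesis unfolding F_def h3 using h1 h2 by linarith
      qed
      have "p12 * (A t)^2 \<ge> 0" using pos by simp
      then have H2: "F \<ge> - p11 * (v t)^2" unfolding F_def using mu1 by linarith
      have llb: "ll \<ge> 3 * b + 1" using p11i by (simp add: ll_def)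
      have H3: "(v t)^2 + \<epsilon> * v t + (M2/\<alpha>) * s t = ll * m" using QL by (simp add: Q_def L_def)
      have "2 * M1 * M2 * (s t)^2 + F * v t * (2 * v t + \<epsilon>) - \<epsilon> * M2 * s t < 0"
        using Q_face_alg[OF pos(1) pos(2) pos(4) Dpos epos Rpos meps H1 H2 H3 spos b_def f_def llb K1_def
          sm(2)[unfolded a2_def] sm(1)[unfolded a1_def]] .
      then show "Qd t < 0" using Qde by simp
    qed
    have Qbot: "\<forall>\<^sub>F t in at_bot. Q t < L"
    proof -
      have "(Q \<longlongrightarrow> e^2 + \<epsilon> * e + (M2 / \<alpha>) * 0) at_bot"
        unfolding Q_def[abs_def] using vbot sbot by (intro tendsto_intros)
      moreover have "e^2 + \<epsilon> * e + (M2 / \<alpha>) * 0 < L"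
      proof -
        have "- \<mu>1 \<le> m" using mu1b abs_ge_minus_self[of \<mu>1] by linarith
        then have "(- \<mu>1) / p11 \<le> m / p11" using pos(4) by (intro divide_right_mono) auto
        then have ee: "e^2 \<le> m / p11" using e2 by simp
        have "\<epsilon> * e \<le> (m + e^2) / 2"
        proof -
          have "0 \<le> (\<epsilon> - e)^2" by simp
          then show ?thesis using meps by (simp add: power2_eq_square algebra_simps)
        qed
        moreover have "m / p11 + (m + m / p11) / 2 < ll * m"
        proof -
          have "ll * m = 3 * b * m + 2 * (m / p11) + m" by (simp add: ll_def algebra_simps)
          moreover have "b * m > 0" using bpos mpos by simp
          moreover have "m / p11 \<ge> 0" using mpos pos by simp
          ultimately show ?thesis using mpos by argo
        qed
        ultimately have "e^2 + \<epsilon> * e < ll * m" using ee by argo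
        then show ?thesis by (simp add: L_def)
      qed
      ultimately show ?thesis by (rule order_tendstoD(2))
    qed
    have QltL: "Q x < L" for x by (rule trap_backward[OF dQ Qface Qbot])
    have Qt: "(v t)^2 + \<epsilon> * v t + (M2/\<alpha>) * s t < ll * m" using QltL[of t] by (simp add: Q_def L_def)
    have st: "s t > 0" using spos .
    have sq: "(v t)^2 + \<epsilon> * v t \<ge> - m/4"
    proof -
      have "0 \<le> (v t + \<epsilon>/2)^2" by simp
      also have "(v t + \<epsilon>/2)^2 = (v t)^2 + \<epsilon> * v t + m/4" unfolding meps by (simp add: power2_eq_square algebra_simps)
      finally show ?thesis by simp
    qed
    have sb: "s t \<le> C * m"
    proof -
      have "(M2/\<alpha>) * s t < (ll + 1/4) * m" using Qt sq by (simp add: algebra_simps)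
      then have "M2 * s t < (ll + 1/4) * m * \<alpha>" using pos by (simp add: field_simps)
      then have "s t < (ll + 1/4) * m * \<alpha> / M2" using pos by (simp add: field_simps)
      also have "\<dots> \<le> C * m"
      proof -
        have "(ll + 1/4) * \<alpha> / M2 \<le> C" unfolding C_def using pos llpos
          by (simp add: divide_right_mono add_increasing)
        then have "(ll + 1/4) * \<alpha> / M2 * m \<le> C * m" using mpos by (intro mult_right_mono) auto
        moreover have "(ll + 1/4) * m * \<alpha> / M2 = (ll + 1/4) * \<alpha> / M2 * m" by simp
        ultimately show ?thesis by linarith
      qed
      finally show ?thesis by simp
    qed
    have vb: "\<bar>v t\<bar> \<le> C * \<epsilon>"
    proof -
      have "\<epsilon> * \<bar>v t\<bar> \<le> (m + (v t)^2) / 2"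
      proof -
        have "0 \<le> (\<epsilon> - \<bar>v t\<bar>)^2" by simp
        then show ?thesis using meps by (simp add: power2_eq_square algebra_simps)
      qed
      moreover have "- (\<epsilon> * v t) \<le> \<epsilon> * \<bar>v t\<bar>"
      proof -
        have "\<epsilon> * (- v t) \<le> \<epsilon> * \<bar>v t\<bar>" using epos by (intro mult_left_mono) auto
        then show ?thesis by simp
      qed
      moreover have "(M2/\<alpha>) * s t > 0" using st pos by simp
      ultimately have v2: "(v t)^2 \<le> (2 * ll + 1) * m" using Qt by (simp add: algebra_simps)
      have "(2 * ll + 1) * m \<le> (2 * ll + 1)^2 * m" using llpos mpos
        by (intro mult_right_mono) (auto simp: power2_eq_square)
      also have "\<dots> = ((2 * ll + 1) * \<epsilon>)^2" using meps by (simp add: power_mult_distrib)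
      finally have "\<bar>v t\<bar>^2 \<le> \<bar>(2 * ll + 1) * \<epsilon>\<bar>^2" using v2 by simp
      then have "\<bar>v t\<bar> \<le> \<bar>(2 * ll + 1) * \<epsilon>\<bar>" using abs_le_square_iff by (metis abs_abs power2_abs)
      also have "\<dots> = (2 * ll + 1) * \<epsilon>" using llpos epos by simp
      also have "\<dots> \<le> C * \<epsilon>" using epos pos llpos unfolding C_def by (intro mult_right_mono) auto
      finally show ?thesis .
    qed
    show "\<bar>v t\<bar> \<le> C * sqrt (sqrt (\<mu>1^2 + \<mu>2^2))"
      using vb by (simp add: \<epsilon>_def m_def)
    show "\<bar>s t\<bar> \<le> C * sqrt (\<mu>1^2 + \<mu>2^2)"
      using sb st by (simp add: m_def)
  qed
qed


end
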